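(* For $s,s'\in\mathbb C$ define $d_{s,s'}\colon G/M\to\mathbb C$ by $d_{s,s'}(gM)=q^{(\frac12+is)H(g)}q^{(\frac12+is')H(gr)}$. Then for all $g,g'\in G$ and $n\in\mathbb Z$: (i) $d_{s,s'}(g'gM)=q^{(\frac12+is)\langle g'o,g'g\omega_+\rangle}q^{(\frac12+is')\langle g'o,g'g\omega_-\rangle}d_{s,s'}(gM)$; (ii) $d_{s,s'}(g\tau^nM)=q^{n(\frac12+is)}q^{-n(\frac12+is')}d_{s,s'}(gM)$.
   Context: Let $q\ge2$ and $\mathfrak G$ the $(q+1)$-regular tree with vertex set $\mathfrak X$, graph distance $d$ and boundary $\Omega$ (infinite non-backtracking edge chains modulo eventual equality up to shift); $[x,\omega)$ is the ray from $x$ to $\omega$. Fix a vertex $o$ and $\omega_-\neq\omega_+\in\Omega$ with $o$ on the geodesic $]\omega_-,\omega_+[$. $\langle x,\omega\rangle=d(o,y)-d(x,y)$ where $[o,\omega)\cap[x,\omega)=[y,\omega)$. $G=\mathrm{Aut}(\mathfrak G)$, $K=\mathrm{Stab}_G(o)$, $B_{\omega_+}=\{g\in G:g\omega_+=\omega_+,\ g\text{ fixes some vertex}\}$, $\tau\in G$ a fixed automorphism fixing $\omega_\pm$ and translating $]\omega_-,\omega_+[$ one step towards $\omega_+$; each $g\in G$ is $g=kn\tau^j$ with $k\in K,n\in B_{\omega_+}$ and unique $j=:H(g)\in\mathbb Z$. $r\in K$ is fixed with $r^2=\mathrm{id}$, $r\tau^jr^{-1}=\tau^{-j}$. $M=\{\gamma\in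 K:\gamma$ fixes every vertex of $]\omega_-,\omega_+[\}$; $H(g)$ and $H(gr)$ depend only on $gM$. *)

theory Defs
  imports "HOL-Analysis.Analysis"
begin

definition walk :: "('v \<Rightarrow> 'v \<Rightarrow> bool) \<Rightarrow> (nat \<Rightarrow> 'v) \<Rightarrow> nat \<Rightarrow> bool" where
  "walk adj f n \<longleftrightarrow> (\<forall>i<n. adj (f i) (f (Suc i)))"

definition nb_walk :: "('v \<Rightarrow> 'v \<Rightarrow> bool) \<Rightarrow> (nat \<Rightarrow> 'v) \<Rightarrow> nat \<Rightarrow> bool" where
  "nb_walk adj f n \<longleftrightarrow> walk adj f n \<and> (\<forall>i. i + 2 \<le> n \<longrightarrow> f i \<noteq> f (i + 2))"

definition is_tree :: "('v \<Rightarrow> 'v \<Rightarrow> bool) \<Rightarrow> bool" where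
  "is_tree adj \<longleftrightarrow> (\<forall>x y. adj x y \<longrightarrow> adj y x) \<and> (\<forall>x. \<not> adj x x)
     \<and> (\<forall>x y. \<exists>f n. walk adj f n \<and> f 0 = x \<and> f n = y)
     \<and> (\<forall>f n. n > 0 \<and> nb_walk adj f n \<longrightarrow> f 0 \<noteq> f n)"

definition regular :: "('v \<Rightarrow> 'v \<Rightarrow> bool) \<Rightarrow> nat \<Rightarrow> bool" where
  "regular adj k \<longleftrightarrow> (\<forall>x. finite {y. adj x y} \<and> card {y. adj x y} = k)"

definition gdist :: "('v \<Rightarrow> 'v \<Rightarrow> bool) \<Rightarrow> 'v \<Rightarrow> 'v \<Rightarrow> nat" where
  "gdist adj x y = (LEAST n. \<exists>f. walk adj f n \<and> f 0 = x \<and> f n = y)"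

definition is_ray :: "('v \<Rightarrow> 'v \<Rightarrow> bool) \<Rightarrow> (nat \<Rightarrow> 'v) \<Rightarrow> bool" where
  "is_ray adj f \<longleftrightarrow> (\<forall>i. adj (f i) (f (Suc i)) \<and> f i \<noteq> f (i + 2))"

definition ray_equiv :: "(nat \<Rightarrow> 'v) \<Rightarrow> (nat \<Rightarrow> 'v) \<Rightarrow> bool" where
  "ray_equiv f f' \<longleftrightarrow> (\<exists>k m. \<forall>i. f (i + k) = f' (i + m))"

definition boundary :: "('v \<Rightarrow> 'v \<Rightarrow> bool) \<Rightarrow> (nat \<Rightarrow> 'v) set set" where
  "boundary adj = {{f'. is_ray adj f' \<and> ray_equiv f f'} | f. is_ray adj f}"

definition ray_to :: "'v \<Rightarrow> (nat \<Rightarrow> 'v) set \<Rightarrow> nat \<Rightarrow> 'v" where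
  "ray_to x \<omega> = (THE f. f \<in> \<omega> \<and> f 0 = x)"

definition confl :: "'v \<Rightarrow> 'v \<Rightarrow> (nat \<Rightarrow> 'v) set \<Rightarrow> 'v" where
  "confl o' x \<omega> = (THE y. range (ray_to o' \<omega>) \<inter> range (ray_to x \<omega>) = range (ray_to y \<omega>))"

definition pairing :: "('v \<Rightarrow> 'v \<Rightarrow> bool) \<Rightarrow> 'v \<Rightarrow> 'v \<Rightarrow> (nat \<Rightarrow> 'v) set \<Rightarrow> int" where
  "pairing adj o' x \<omega> =
     int (gdist adj o' (confl o' x \<omega>)) - int (gdist adj x (confl o' x \<omega>))"

definition is_line :: "('v \<Rightarrow> 'v \<Rightarrow> bool) \<Rightarrow> (nat \<Rightarrow> 'v) set \<Rightarrow> (nat \<Rightarrow> 'v) set \<Rightarrow> (int \<Rightarrow> 'v) \<Rightarrow> bool" where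
  "is_line adj \<omega>m \<omega>p l \<longleftrightarrow> (\<forall>n. adj (l n) (l (n + 1)) \<and> l n \<noteq> l (n + 2))
     \<and> (\<lambda>i. l (int i)) \<in> \<omega>p \<and> (\<lambda>i. l (- int i)) \<in> \<omega>m"

definition aut :: "('v \<Rightarrow> 'v \<Rightarrow> bool) \<Rightarrow> ('v \<Rightarrow> 'v) set" where
  "aut adj = {g. bij g \<and> (\<forall>x y. adj x y \<longleftrightarrow> adj (g x) (g y))}"

definition bact :: "('v \<Rightarrow> 'v) \<Rightarrow> (nat \<Rightarrow> 'v) set \<Rightarrow> (nat \<Rightarrow> 'v) set" where
  "bact g \<omega> = (\<lambda>f. g \<circ> f) ` \<omega>"

definition tpow :: "('v \<Rightarrow> 'v) \<Rightarrow> int \<Rightarrow> 'v \<Rightarrow> 'v" where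
  "tpow t j = (if 0 \<le> j then t ^^ nat j else inv t ^^ nat (- j))"

definition stabK :: "('v \<Rightarrow> 'v \<Rightarrow> bool) \<Rightarrow> 'v \<Rightarrow> ('v \<Rightarrow> 'v) set" where
  "stabK adj o' = {k \<in> aut adj. k o' = o'}"

definition Bplus :: "('v \<Rightarrow> 'v \<Rightarrow> bool) \<Rightarrow> (nat \<Rightarrow> 'v) set \<Rightarrow> ('v \<Rightarrow> 'v) set" where
  "Bplus adj \<omega>p = {n \<in> aut adj. bact n \<omega>p = \<omega>p \<and> (\<exists>v. n v = v)}"

definition Hc :: "('v \<Rightarrow> 'v \<Rightarrow> bool) \<Rightarrow> 'v \<Rightarrow> (nat \<Rightarrow> 'v) set \<Rightarrow> ('v \<Rightarrow> 'v) \<Rightarrow> ('v \<Rightarrow> 'v) \<Rightarrow> int" where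
  "Hc adj o' \<omega>p t g = (THE j. \<exists>k n. k \<in> stabK adj o' \<and> n \<in> Bplus adj \<omega>p \<and> g = k \<circ> n \<circ> tpow t j)"

text \<open>d_{s,s'}(gM) = q^{(1/2+is)H(g)} q^{(1/2+is')H(gr)}, written as a function of the
  representative g.\<close>
definition dfun :: "('v \<Rightarrow> 'v \<Rightarrow> bool) \<Rightarrow> nat \<Rightarrow> 'v \<Rightarrow> (nat \<Rightarrow> 'v) set \<Rightarrow> ('v \<Rightarrow> 'v) \<Rightarrow> ('v \<Rightarrow> 'v)
     \<Rightarrow> complex \<Rightarrow> complex \<Rightarrow> ('v \<Rightarrow> 'v) \<Rightarrow> complex" where
  "dfun adj q o' \<omega>p t r s s' g =
     (complex_of_nat q) powr ((1/2 + \<i> * s) * of_int (Hc adj o' \<omega>p t g)) *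
     (complex_of_nat q) powr ((1/2 + \<i> * s') * of_int (Hc adj o' \<omega>p t (g \<circ> r)))"

end

theory Submission
  imports Defs "HOL-Combinatorics.Transposition"
begin


locale tr =
  fixes adj :: "'v \<Rightarrow> 'v \<Rightarrow> bool"
  assumes tree: "is_tree adj"
begin

abbreviation d where "d \<equiv> gdist adj"

lemma adj_sym: "adj x y \<Longrightarrow> adj y x" using tree unfolding is_tree_def by blast
lemma adj_irr: "\<not> adj x x" using tree unfolding is_tree_def by blast
lemma acyc: "n > 0 \<Longrightarrow> nb_walk adj f n \<Longrightarrow> f 0 = f n \<Longrightarrow> False"
  using tree unfolding is_tree_def by blast

lemma dist_walk: "\<exists>f. walk adj f (d x y) \<and> f 0 = x \<and> f (d x y) = y"
proof -
  have "\<exists>f n. walk adj f n \<and> f 0 = x \<and> f n = y" using tree unfolding is_tree_def by blast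
  then obtain n where "\<exists>f. walk adj f n \<and> f 0 = x \<and> f n = y" by blast
  then show ?thesis unfolding gdist_def by (rule LeastI_ex[where P="\<lambda>n. \<exists>f. walk adj f n \<and> f 0 = x \<and> f n = y", OF exI])
qed

lemma dist_le: "walk adj f n \<Longrightarrow> f 0 = x \<Longrightarrow> f n = y \<Longrightarrow> d x y \<le> n"
  unfolding gdist_def by (rule Least_le) blast

lemma dist_self[simp]: "d x x = 0"
  using dist_le[of "\<lambda>i. x" 0 x x] by (simp add: walk_def)

lemma dist_eq0: "d x y = 0 \<Longrightarrow> x = y"
  using dist_walk[of x y] by auto

lemma dist_adj: "adj x y \<Longrightarrow> d x y \<le> 1"
  by (rule dist_le[of "\<lambda>i. if i = 0 then x else y"]) (auto simp: walk_def)

lemma dist_sym_le: "d y x \<le> d x y"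
proof -
  obtain f where f: "walk adj f (d x y)" "f 0 = x" "f (d x y) = y" using dist_walk by blast
  have "walk adj (\<lambda>i. f (d x y - i)) (d x y)"
    unfolding walk_def
  proof (intro allI impI)
    fix i assume "i < d x y"
    then have "adj (f (d x y - Suc i)) (f (Suc (d x y - Suc i)))" using f(1) unfolding walk_def by auto
    moreover have "Suc (d x y - Suc i) = d x y - i" using \<open>i < d x y\<close> by auto
    ultimately show "adj (f (d x y - i)) (f (d x y - Suc i))" using adj_sym by auto
  qed
  then show ?thesis by (rule dist_le) (use f in auto)
qed

lemma dist_sym: "d x y = d y x" using dist_sym_le[of x y] dist_sym_le[of y x] by simp

lemma dist_tri: "d x z \<le> d x y + d y z"
proof -
  obtain f where f: "walk adj f (d x y)" "f 0 = x" "f (d x y) = y" using dist_walk by blast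
  obtain g where g: "walk adj g (d y z)" "g 0 = y" "g (d y z) = z" using dist_walk by blast
  let ?h = "\<lambda>i. if i \<le> d x y then f i else g (i - d x y)"
  have "walk adj ?h (d x y + d y z)"
    unfolding walk_def
  proof (intro allI impI)
    fix i assume i: "i < d x y + d y z"
    show "adj (?h i) (?h (Suc i))"
    proof (cases "i < d x y")
      case True then show ?thesis using f(1) unfolding walk_def by auto
    next
      case False
      then have "i - d x y < d y z" "Suc i - d x y = Suc (i - d x y)" using i by auto
      then show ?thesis using g f False unfolding walk_def
        by (cases "i = d x y") auto
    qed
  qed
  then show ?thesis by (rule dist_le) (use f g in auto)
qed

lemma geodesic: "\<exists>f. walk adj f (d x y) \<and> f 0 = x \<and> f (d x y) = y \<and> (\<forall>i\<le>d x y. d x (f i) = i)"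
proof -
  obtain f where f: "walk adj f (d x y)" "f 0 = x" "f (d x y) = y" using dist_walk by blast
  have "d x (f i) = i" if i: "i \<le> d x y" for i
  proof -
    have "d x (f i) \<le> i" by (rule dist_le[of f]) (use f i in \<open>auto simp: walk_def\<close>)
    moreover have "d (f i) y \<le> d x y - i"
      by (rule dist_le[of "\<lambda>j. f (j + i)"]) (use f i in \<open>auto simp: walk_def\<close>)
    moreover have "d x y \<le> d x (f i) + d (f i) y" by (rule dist_tri)
    ultimately show ?thesis using i by linarith
  qed
  then show ?thesis using f by blast
qed

lemma no_equal_adj: "adj a b \<Longrightarrow> d x a = d x b \<Longrightarrow> False"
proof -
  assume ab: "adj a b" and e: "d x a = d x b"
  define m where "m = d x a"
  obtain p where p: "walk adj p m" "p 0 = x" "p m = a" "\<forall>i\<le>m. d x (p i) = i"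
    using geodesic[of x a] unfolding m_def by blast
  obtain p' where p': "walk adj p' m" "p' 0 = x" "p' m = b" "\<forall>i\<le>m. d x (p' i) = i"
    using geodesic[of x b] unfolding m_def e by blast
  define h where "h j = (if j \<le> m then p j else p' (2*m+1-j))" for j
  have hd: "d x (h j) = min j (2*m+1-j)" if "j \<le> 2*m+1" for j
  proof (cases "j \<le> m")
    case True then show ?thesis using p(4) unfolding h_def by simp
  next
    case False then have "2*m+1-j \<le> m" using that by simp
    then show ?thesis using p'(4) False unfolding h_def by simp
  qed
  have "walk adj h (2*m+1)"
    unfolding walk_def
  proof (intro allI impI)
    fix i assume i: "i < 2*m+1"
    consider "i < m" | "i = m" | "i > m" by linarith
    then show "adj (h i) (h (Suc i))"
    proof cases
      case 1 then show ?thesis using p(1) unfolding walk_def h_def by simp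
    next
      case 2 then show ?thesis using ab p(3) p'(3) unfolding h_def by simp
    next
      case 3
      define k where "k = 2*m+1 - Suc i"
      have k: "k < m" "2*m+1-i = Suc k" using i 3 unfolding k_def by auto
      have "adj (p' k) (p' (Suc k))" using p'(1) k(1) unfolding walk_def by simp
      then have "adj (p' (Suc k)) (p' k)" by (rule adj_sym)
      then show ?thesis using 3 k unfolding h_def k_def by simp
    qed
  qed
  moreover have "h j \<noteq> h (j+2)" if "j + 2 \<le> 2*m+1" for j
  proof
    assume "h j = h (j+2)"
    then have "d x (h j) = d x (h (j+2))" by simp
    then have "min j (2*m+1-j) = min (j+2) (2*m+1-(j+2))" using hd[of j] hd[of "j+2"] that by simp
    then show False using that unfolding min_def by (auto split: if_splits; presburger)
  qed
  ultimately have "nb_walk adj h (2*m+1)" unfolding nb_walk_def by auto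
  moreover have "h 0 = h (2*m+1)" using p(2) p'(2) unfolding h_def by simp
  ultimately show False using acyc[of "2*m+1" h] by simp
qed

lemma parent_unique: "adj z a \<Longrightarrow> adj z b \<Longrightarrow> d x a + 1 = d x z \<Longrightarrow> d x b + 1 = d x z \<Longrightarrow> a = b"
proof (rule ccontr)
  assume za: "adj z a" and zb: "adj z b" and ea: "d x a + 1 = d x z" and eb: "d x b + 1 = d x z" and ne: "a \<noteq> b"
  define m where "m = d x a"
  have mb: "m = d x b" using ea eb m_def by simp
  obtain p where p: "walk adj p m" "p 0 = x" "p m = a" "\<forall>i\<le>m. d x (p i) = i"
    using geodesic[of x a] unfolding m_def by blast
  obtain p' where p': "walk adj p' m" "p' 0 = x" "p' m = b" "\<forall>i\<le>m. d x (p' i) = i"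
    using geodesic[of x b] unfolding mb by blast
  define h where "h j = (if j \<le> m then p j else if j = m+1 then z else p' (2*m+2-j))" for j
  have hd: "d x (h j) = min j (2*m+2-j)" if "j \<le> 2*m+2" for j
  proof -
    consider "j \<le> m" | "j = m+1" | "j > m+1" by linarith
    then show ?thesis
    proof cases
      case 1 then show ?thesis using p(4) unfolding h_def by simp
    next
      case 2 then show ?thesis using ea m_def unfolding h_def by simp
    next
      case 3 then have "2*m+2-j \<le> m" using that by simp
      then show ?thesis using p'(4) 3 unfolding h_def by simp
    qed
  qed
  have "walk adj h (2*m+2)"
    unfolding walk_def
  proof (intro allI impI)
    fix i assume i: "i < 2*m+2"
    consider "i < m" | "i = m" | "i = m+1" | "i > m+1" by linarith
    then show "adj (h i) (h (Suc i))"
    proof cases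
      case 1 then show ?thesis using p(1) unfolding walk_def h_def by simp
    next
      case 2 then show ?thesis using adj_sym[OF za] p(3) unfolding h_def by simp
    next
      case 3 then show ?thesis using zb p'(3) unfolding h_def by simp
    next
      case 4
      define k where "k = 2*m+2 - Suc i"
      have k: "k < m" "2*m+2-i = Suc k" using i 4 unfolding k_def by auto
      have "adj (p' k) (p' (Suc k))" using p'(1) k(1) unfolding walk_def by simp
      then have "adj (p' (Suc k)) (p' k)" by (rule adj_sym)
      then show ?thesis using 4 k unfolding h_def k_def by simp
    qed
  qed
  moreover have "h j \<noteq> h (j+2)" if "j + 2 \<le> 2*m+2" for j
  proof
    assume hj: "h j = h (j+2)"
    show False
    proof (cases "j = m")
      case True then show False using hj ne p(3) p'(3) unfolding h_def by simp
    next
      case False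
      from hj have "d x (h j) = d x (h (j+2))" by simp
      then have "min j (2*m+2-j) = min (j+2) (2*m+2-(j+2))" using hd[of j] hd[of "j+2"] that by simp
      then show False using that False unfolding min_def by (auto split: if_splits; presburger)
    qed
  qed
  ultimately have "nb_walk adj h (2*m+2)" unfolding nb_walk_def by auto
  moreover have "h 0 = h (2*m+2)" using p(2) p'(2) unfolding h_def by simp
  ultimately show False using acyc[of "2*m+2" h] by simp
qed

lemma adj_dist: "adj a b \<Longrightarrow> d x b = d x a + 1 \<or> d x a = d x b + 1"
proof -
  assume ab: "adj a b"
  have "d x b \<le> d x a + 1" using dist_tri[of x b a] dist_adj[OF ab] by simp
  moreover have "d x a \<le> d x b + 1" using dist_tri[of x a b] dist_adj[OF adj_sym[OF ab]] by simp
  moreover have "d x a \<noteq> d x b" using no_equal_adj[OF ab] by blast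
  ultimately show ?thesis by linarith
qed

subsection \<open>Rays\<close>

lemma ray_adj: "is_ray adj f \<Longrightarrow> adj (f i) (f (Suc i))" unfolding is_ray_def by blast
lemma ray_nb: "is_ray adj f \<Longrightarrow> f i \<noteq> f (i+2)" unfolding is_ray_def by blast

lemma ray_dist: assumes f: "is_ray adj f" shows "d (f 0) (f i) = i"
proof (induction i rule: less_induct)
  case (less i)
  show ?case
  proof (cases i)
    case 0 then show ?thesis by simp
  next
    case (Suc j)
    have IHj: "d (f 0) (f j) = j" using less Suc by simp
    from adj_dist[OF ray_adj[OF f, of j], of "f 0"] IHj
    have "d (f 0) (f i) = j + 1 \<or> j = d (f 0) (f i) + 1" using Suc by simp
    then show ?thesis
    proof
      assume "d (f 0) (f i) = j + 1" then show ?thesis using Suc by simp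
    next
      assume h: "j = d (f 0) (f i) + 1"
      then obtain k where k: "j = Suc k" by (cases j) auto
      have IHk: "d (f 0) (f k) = k" using less Suc k by simp
      have "f k = f (Suc (Suc k))"
      proof (rule parent_unique[of "f j" _ _ "f 0"])
        show "adj (f j) (f k)" using adj_sym[OF ray_adj[OF f, of k]] k by simp
        show "adj (f j) (f (Suc (Suc k)))" using ray_adj[OF f, of j] k by simp
        show "d (f 0) (f k) + 1 = d (f 0) (f j)" using IHk IHj k by simp
        show "d (f 0) (f (Suc (Suc k))) + 1 = d (f 0) (f j)" using h IHj k Suc by simp
      qed
      then show ?thesis using ray_nb[OF f, of k] by simp
    qed
  qed
qed

lemma ray_shift: "is_ray adj f \<Longrightarrow> is_ray adj (\<lambda>i. f (i + k))"
  unfolding is_ray_def by (simp add: add.commute add.left_commute)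

lemma ray_dist2: "is_ray adj f \<Longrightarrow> d (f k) (f (i + k)) = i"
  using ray_dist[OF ray_shift[of f k], of i] by simp

lemma ray_inj: assumes f: "is_ray adj f" and e: "f i = f j" shows "i = j"
proof -
  { fix i j assume ij: "i \<le> j" "f i = f j"
    then have "d (f i) (f ((j - i) + i)) = j - i" using ray_dist2[OF f] by blast
    then have "i = j" using ij by simp }
  then show ?thesis using e by (metis nat_le_linear)
qed

lemma equiv_refl: "ray_equiv f f" unfolding ray_equiv_def by (rule exI[of _ 0], rule exI[of _ 0]) simp
lemma equiv_sym: "ray_equiv f g \<Longrightarrow> ray_equiv g f" unfolding ray_equiv_def by metis
lemma equiv_trans: assumes "ray_equiv f g" "ray_equiv g h" shows "ray_equiv f h"
proof -
  obtain k m where 1: "\<forall>i. f (i + k) = g (i + m)" using assms(1) unfolding ray_equiv_def by blast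
  obtain k' m' where 2: "\<forall>i. g (i + k') = h (i + m')" using assms(2) unfolding ray_equiv_def by blast
  have "\<forall>i. f (i + (k + k')) = h (i + (m + m'))"
  proof
    fix i
    have "f (i + (k + k')) = g (i + k' + m)" using 1[rule_format, of "i + k'"] by (simp add: ac_simps)
    also have "\<dots> = h (i + m + m')" using 2[rule_format, of "i + m"] by (simp add: ac_simps)
    finally show "f (i + (k + k')) = h (i + (m + m'))" by (simp add: ac_simps)
  qed
  then show ?thesis unfolding ray_equiv_def by blast
qed
lemma equiv_shift: "ray_equiv f (\<lambda>i. f (i + k))"
  unfolding ray_equiv_def by (rule exI[of _ k], rule exI[of _ 0]) simp

lemma ray_unique:
  assumes f: "is_ray adj f" and g: "is_ray adj g" and e0: "f 0 = g 0" and eq: "ray_equiv f g"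
  shows "f = g"
proof -
  obtain k m where km: "\<forall>i. f (i + k) = g (i + m)" using eq unfolding ray_equiv_def by blast
  have "f k = g m" using km[rule_format, of 0] by simp
  moreover have "d (f 0) (f k) = k" using ray_dist[OF f] .
  moreover have "d (g 0) (g m) = m" using ray_dist[OF g] .
  ultimately have mk: "m = k" using e0 by simp
  have claim: "j \<le> k \<Longrightarrow> f (k - j) = g (k - j)" for j
  proof (induction j)
    case 0 then show ?case using km[rule_format, of 0] mk by simp
  next
    case (Suc j)
    then have z: "f (k - j) = g (k - j)" by simp
    have s: "k - j = Suc (k - Suc j)" using Suc.prems by simp
    show ?case
    proof (rule parent_unique[of "f (k - j)" _ _ "f 0"])
      show "adj (f (k - j)) (f (k - Suc j))" using adj_sym[OF ray_adj[OF f, of "k - Suc j"]] s by simp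
      show "adj (f (k - j)) (g (k - Suc j))" using adj_sym[OF ray_adj[OF g, of "k - Suc j"]] s z by simp
      show "d (f 0) (f (k - Suc j)) + 1 = d (f 0) (f (k - j))" using ray_dist[OF f] s by simp
      have "d (g 0) (g (k - Suc j)) = k - Suc j" by (rule ray_dist[OF g])
      then show "d (f 0) (g (k - Suc j)) + 1 = d (f 0) (f (k - j))" using ray_dist[OF f, of "k - j"] s e0 by simp
    qed
  qed
  show ?thesis
  proof
    fix i
    show "f i = g i"
    proof (cases "i \<le> k")
      case True then show ?thesis using claim[of "k - i"] by simp
    next
      case False
      then show ?thesis using km[rule_format, of "i - k"] mk by simp
    qed
  qed
qed

subsection \<open>Ends\<close>

definition cls where "cls f = {f'. is_ray adj f' \<and> ray_equiv f f'}"

lemma bdry_cls: "\<omega> \<in> boundary adj \<Longrightarrow> \<exists>f. is_ray adj f \<and> \<omega> = cls f"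
  unfolding boundary_def cls_def by blast

lemma cls_in_bdry: "is_ray adj f \<Longrightarrow> cls f \<in> boundary adj"
  unfolding boundary_def cls_def by blast

lemma cls_eq: assumes e: "ray_equiv f g" shows "cls f = cls g"
proof -
  have "ray_equiv f h \<longleftrightarrow> ray_equiv g h" for h
    using equiv_trans[OF equiv_sym[OF e], of h] equiv_trans[OF e, of h] by blast
  then show ?thesis unfolding cls_def by simp
qed

lemma bdry_mem_ray: "\<omega> \<in> boundary adj \<Longrightarrow> g \<in> \<omega> \<Longrightarrow> is_ray adj g"
  using bdry_cls unfolding cls_def by blast

lemma bdry_equiv: assumes w: "\<omega> \<in> boundary adj" and g: "g \<in> \<omega>" and g': "g' \<in> \<omega>" shows "ray_equiv g g'"
proof -
  obtain f where f: "\<omega> = cls f" using bdry_cls[OF w] by blast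
  have "ray_equiv f g" "ray_equiv f g'" using g g' f unfolding cls_def by auto
  then show ?thesis using equiv_trans[OF equiv_sym] by blast
qed

lemma bdry_mem_cls: assumes w: "\<omega> \<in> boundary adj" and g: "g \<in> \<omega>" shows "\<omega> = cls g"
proof -
  obtain f where f: "\<omega> = cls f" using bdry_cls[OF w] by blast
  have "ray_equiv f g" using g f unfolding cls_def by auto
  then show ?thesis using f cls_eq by simp
qed

lemma bdry_add: assumes w: "\<omega> \<in> boundary adj" and g: "g \<in> \<omega>" and r: "is_ray adj g'" and e: "ray_equiv g g'"
  shows "g' \<in> \<omega>"
proof -
  obtain f where f: "\<omega> = cls f" using bdry_cls[OF w] by blast
  have "ray_equiv f g" using g f unfolding cls_def by auto
  then have "ray_equiv f g'" using equiv_trans e by blast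
  then show ?thesis using f r unfolding cls_def by simp
qed

lemma ray_from:
  assumes f: "is_ray adj f" shows "\<exists>h. is_ray adj h \<and> h 0 = x \<and> ray_equiv f h"
proof -
  obtain k where kmin: "\<forall>j. d x (f k) \<le> d x (f j)"
    using ex_has_least_nat[of "\<lambda>_. True" 0 "\<lambda>j. d x (f j)"] by blast
  define m where "m = d x (f k)"
  obtain p where p: "walk adj p m" "p 0 = x" "p m = f k" "\<forall>i\<le>m. d x (p i) = i"
    using geodesic[of x "f k"] unfolding m_def by blast
  define h where "h i = (if i \<le> m then p i else f (i - m + k))" for i
  have hm: "h i = f (i - m + k)" if "i \<ge> m" for i
    using that p(3) unfolding h_def by (cases "i = m") auto
  have hm2: "h (j + m) = f (j + k)" for j using hm[of "j + m"] by simp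
  have "is_ray adj h"
    unfolding is_ray_def
  proof (intro allI conjI)
    fix i
    show "adj (h i) (h (Suc i))"
    proof (cases "i < m")
      case True then show ?thesis using p(1) unfolding walk_def h_def by simp
    next
      case False
      then obtain j where j: "i = j + m" by (metis add.commute le_Suc_ex not_less)
      have "h i = f (j + k)" "h (Suc i) = f (Suc (j + k))" using hm2[of j] hm2[of "Suc j"] j by auto
      then show ?thesis using ray_adj[OF f] by simp
    qed
    show "h i \<noteq> h (i + 2)"
    proof (cases "i + 2 \<le> m")
      case True
      then have "h i = p i" "h (i+2) = p (i+2)" unfolding h_def by auto
      moreover have "d x (p i) = i" "d x (p (i+2)) = i + 2" using p(4) True by auto
      ultimately show ?thesis by auto
    next
      case False
      show ?thesis
      proof (cases "i < m")
        case True
        then have "i + 1 = m" using False by simp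
        then have "h i = p i" "d x (p i) + 1 = m" using p(4) unfolding h_def by auto
        moreover have "i + 2 - m + k = k + 1" using \<open>i + 1 = m\<close> by simp
        then have "h (i + 2) = f (k + 1)" using hm[of "i+2"] \<open>i + 1 = m\<close> by simp
        moreover have "m \<le> d x (f (k+1))" using kmin m_def by blast
        ultimately show ?thesis by auto
      next
        case False
        then obtain j where j: "i = j + m" by (metis add.commute le_Suc_ex not_less)
        have "h i = f (j + k)" "h (i + 2) = f (j + k + 2)" using hm2[of j] hm2[of "j + 2"] j by (auto simp: ac_simps)
        then show ?thesis using ray_nb[OF f] by simp
      qed
    qed
  qed
  moreover have "h 0 = x" using p(2) unfolding h_def by simp
  moreover have "ray_equiv f h"
    unfolding ray_equiv_def
    by (rule exI[of _ k], rule exI[of _ m]) (simp add: hm)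
  ultimately show ?thesis by blast
qed

lemma ray_to_eq: assumes "\<omega> \<in> boundary adj" "g \<in> \<omega>" "g 0 = x" shows "ray_to x \<omega> = g"
  unfolding ray_to_def
proof (rule the_equality)
  show "g \<in> \<omega> \<and> g 0 = x" using assms by simp
  fix g' assume "g' \<in> \<omega> \<and> g' 0 = x"
  then have g': "g' \<in> \<omega>" "g' 0 = x" by auto
  show "g' = g"
    by (rule ray_unique[OF bdry_mem_ray[OF assms(1) g'(1)] bdry_mem_ray[OF assms(1,2)]])
       (use g' assms bdry_equiv in auto)
qed

lemma ray_to_mem: assumes w: "\<omega> \<in> boundary adj" shows "ray_to x \<omega> \<in> \<omega>" "ray_to x \<omega> 0 = x"
proof -
  obtain f where f: "is_ray adj f" "\<omega> = cls f" using bdry_cls[OF w] by blast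
  obtain h where h: "is_ray adj h" "h 0 = x" "ray_equiv f h" using ray_from[OF f(1)] by blast
  have "h \<in> \<omega>" using f h unfolding cls_def by simp
  then show "ray_to x \<omega> \<in> \<omega>" "ray_to x \<omega> 0 = x" using ray_to_eq[OF w \<open>h \<in> \<omega>\<close> h(2)] h by auto
qed

lemma ray_to_ray: "\<omega> \<in> boundary adj \<Longrightarrow> is_ray adj (ray_to x \<omega>)"
  using ray_to_mem bdry_mem_ray by blast

lemma ray_to_shift: assumes w: "\<omega> \<in> boundary adj"
  shows "ray_to (ray_to x \<omega> k) \<omega> = (\<lambda>i. ray_to x \<omega> (i + k))"
proof (rule ray_to_eq[OF w])
  show "(\<lambda>i. ray_to x \<omega> (i + k)) \<in> \<omega>"
    by (rule bdry_add[OF w ray_to_mem(1)[OF w] ray_shift[OF ray_to_ray[OF w]] equiv_shift])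
qed simp

subsection \<open>Busemann cocycle\<close>

definition Bus where
  "Bus \<omega> x y = (THE z. \<exists>a b. (\<forall>i. ray_to x \<omega> (i + a) = ray_to y \<omega> (i + b)) \<and> z = int a - int b)"

lemma Bus_char: assumes w: "\<omega> \<in> boundary adj" and ab: "\<forall>i. ray_to x \<omega> (i + a) = ray_to y \<omega> (i + b)"
  shows "Bus \<omega> x y = int a - int b"
  unfolding Bus_def
proof (rule the_equality)
  show "\<exists>a' b'. (\<forall>i. ray_to x \<omega> (i + a') = ray_to y \<omega> (i + b')) \<and> int a - int b = int a' - int b'"
    using ab by blast
  fix z assume "\<exists>a' b'. (\<forall>i. ray_to x \<omega> (i + a') = ray_to y \<omega> (i + b')) \<and> z = int a' - int b'"
  then obtain a' b' where ab': "\<forall>i. ray_to x \<omega> (i + a') = ray_to y \<omega> (i + b')" and z: "z = int a' - int b'"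
    by blast
  have S: "is_ray adj (ray_to y \<omega>)" by (rule ray_to_ray[OF w])
  show "z = int a - int b"
  proof (cases "a \<le> a'")
    case True
    have "ray_to y \<omega> ((a' - a) + b) = ray_to y \<omega> (0 + b')"
      using ab[rule_format, of "a' - a"] ab'[rule_format, of 0] True by simp
    then have "(a' - a) + b = b'" using ray_inj[OF S] by simp
    then show ?thesis using z True by simp
  next
    case False
    have "ray_to y \<omega> ((a - a') + b') = ray_to y \<omega> (0 + b)"
      using ab'[rule_format, of "a - a'"] ab[rule_format, of 0] False by simp
    then have "(a - a') + b' = b" using ray_inj[OF S] by simp
    then show ?thesis using z False by simp
  qed
qed

lemma Bus_ex: assumes w: "\<omega> \<in> boundary adj"
  shows "\<exists>a b. \<forall>i. ray_to x \<omega> (i + a) = ray_to y \<omega> (i + b)"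
  using bdry_equiv[OF w ray_to_mem(1)[OF w] ray_to_mem(1)[OF w]] unfolding ray_equiv_def by blast

lemma Bus_self: "\<omega> \<in> boundary adj \<Longrightarrow> Bus \<omega> x x = 0"
  using Bus_char[of \<omega> x 0 x 0] by simp

lemma Bus_cocycle: assumes w: "\<omega> \<in> boundary adj"
  shows "Bus \<omega> x z = Bus \<omega> x y + Bus \<omega> y z"
proof -
  obtain a b where ab: "\<forall>i. ray_to x \<omega> (i + a) = ray_to y \<omega> (i + b)" using Bus_ex[OF w] by blast
  obtain c e where ce: "\<forall>i. ray_to y \<omega> (i + c) = ray_to z \<omega> (i + e)" using Bus_ex[OF w] by blast
  have "\<forall>i. ray_to x \<omega> (i + (a + c)) = ray_to z \<omega> (i + (b + e))"
  proof
    fix i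
    have "ray_to x \<omega> (i + (a + c)) = ray_to y \<omega> (i + c + b)"
      using ab[rule_format, of "i + c"] by (simp add: ac_simps)
    also have "\<dots> = ray_to z \<omega> (i + b + e)"
      using ce[rule_format, of "i + b"] by (simp add: ac_simps)
    finally show "ray_to x \<omega> (i + (a + c)) = ray_to z \<omega> (i + (b + e))" by (simp add: ac_simps)
  qed
  then show ?thesis using Bus_char[OF w ab] Bus_char[OF w ce] Bus_char[OF w] by simp
qed

subsection \<open>Automorphisms\<close>

lemma aut_bij: "g \<in> aut adj \<Longrightarrow> bij g" unfolding aut_def by blast
lemma aut_adj: "g \<in> aut adj \<Longrightarrow> adj x y \<longleftrightarrow> adj (g x) (g y)" unfolding aut_def by blast

lemma aut_inv: assumes g: "g \<in> aut adj" shows "inv g \<in> aut adj"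
proof -
  have b: "bij g" using aut_bij[OF g] .
  have "adj x y \<longleftrightarrow> adj (inv g x) (inv g y)" for x y
    using aut_adj[OF g, of "inv g x" "inv g y"] b by (simp add: bij_inv_eq_iff surj_f_inv_f bij_is_surj)
  then show ?thesis unfolding aut_def using b bij_imp_bij_inv by blast
qed

lemma aut_comp: "g \<in> aut adj \<Longrightarrow> h \<in> aut adj \<Longrightarrow> g \<circ> h \<in> aut adj"
  unfolding aut_def by (auto intro: bij_comp)

lemma aut_id: "id \<in> aut adj" unfolding aut_def by simp

lemma aut_ray: assumes g: "g \<in> aut adj" and f: "is_ray adj f" shows "is_ray adj (g \<circ> f)"
proof -
  have "inj g" using aut_bij[OF g] bij_is_inj by blast
  then show ?thesis using f aut_adj[OF g] unfolding is_ray_def by (auto simp: inj_eq)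
qed

lemma bact_comp: "bact (g \<circ> h) \<omega> = bact g (bact h \<omega>)"
  unfolding bact_def by (simp add: image_image comp_assoc)

lemma bact_id: "bact id \<omega> = \<omega>" unfolding bact_def by simp

lemma bact_cls: assumes g: "g \<in> aut adj" and f: "is_ray adj f" shows "bact g (cls f) = cls (g \<circ> f)"
proof
  show "bact g (cls f) \<subseteq> cls (g \<circ> f)"
  proof
    fix h' assume "h' \<in> bact g (cls f)"
    then obtain h where h: "h \<in> cls f" "h' = g \<circ> h" unfolding bact_def by blast
    then have hr: "is_ray adj h" "ray_equiv f h" unfolding cls_def by auto
    then obtain k m where "\<forall>i. f (i + k) = h (i + m)" unfolding ray_equiv_def by blast
    then have "\<forall>i. (g \<circ> f) (i + k) = (g \<circ> h) (i + m)" by simp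
    then have "ray_equiv (g \<circ> f) (g \<circ> h)" unfolding ray_equiv_def by blast
    then show "h' \<in> cls (g \<circ> f)" using h aut_ray[OF g hr(1)] unfolding cls_def by auto
  qed
  show "cls (g \<circ> f) \<subseteq> bact g (cls f)"
  proof
    fix h' assume h': "h' \<in> cls (g \<circ> f)"
    have b: "bij g" using aut_bij[OF g] .
    have "inv g \<circ> h' \<in> cls f"
    proof -
      have "is_ray adj (inv g \<circ> h')" using h' aut_ray[OF aut_inv[OF g]] unfolding cls_def by auto
      moreover obtain k m where "\<forall>i. g (f (i + k)) = h' (i + m)" using h' unfolding cls_def ray_equiv_def by auto
      then have "\<forall>i. f (i + k) = inv g (h' (i + m))" using b by (metis bij_inv_eq_iff)
      then have "ray_equiv f (inv g \<circ> h')" unfolding ray_equiv_def by auto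
      ultimately show ?thesis unfolding cls_def by simp
    qed
    moreover have "g \<circ> inv g = id" using b bij_is_surj surj_iff by blast
    then have "h' = g \<circ> (inv g \<circ> h')" by (metis comp_assoc id_comp)
    ultimately show "h' \<in> bact g (cls f)" unfolding bact_def by blast
  qed
qed

lemma bact_bdry: assumes g: "g \<in> aut adj" and w: "\<omega> \<in> boundary adj" shows "bact g \<omega> \<in> boundary adj"
proof -
  obtain f where f: "is_ray adj f" "\<omega> = cls f" using bdry_cls[OF w] by blast
  show ?thesis using bact_cls[OF g f(1)] f cls_in_bdry aut_ray[OF g f(1)] by simp
qed

lemma ray_to_bact: assumes g: "g \<in> aut adj" and w: "\<omega> \<in> boundary adj"
  shows "ray_to (g x) (bact g \<omega>) = g \<circ> ray_to x \<omega>"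
  by (rule ray_to_eq[OF bact_bdry[OF g w]]) (use ray_to_mem[OF w] in \<open>auto simp: bact_def\<close>)

lemma Bus_aut: assumes g: "g \<in> aut adj" and w: "\<omega> \<in> boundary adj"
  shows "Bus (bact g \<omega>) (g x) (g y) = Bus \<omega> x y"
proof -
  obtain a b where ab: "\<forall>i. ray_to x \<omega> (i + a) = ray_to y \<omega> (i + b)" using Bus_ex[OF w] by blast
  have "\<forall>i. ray_to (g x) (bact g \<omega>) (i + a) = ray_to (g y) (bact g \<omega>) (i + b)"
    using ab by (simp add: ray_to_bact[OF g w])
  then show ?thesis using Bus_char[OF bact_bdry[OF g w]] Bus_char[OF w ab] by simp
qed

lemma pairing_Bus: assumes w: "\<omega> \<in> boundary adj"
  shows "pairing adj o' x \<omega> = Bus \<omega> o' x"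
proof -
  define R where "R = ray_to o' \<omega>"
  define S where "S = ray_to x \<omega>"
  have Rr: "is_ray adj R" "R 0 = o'" using ray_to_ray[OF w] ray_to_mem[OF w] unfolding R_def by auto
  have Sr: "is_ray adj S" "S 0 = x" using ray_to_ray[OF w] ray_to_mem[OF w] unfolding S_def by auto
  obtain a b where ab: "\<forall>i. R (i + a) = S (i + b)" using Bus_ex[OF w] unfolding R_def S_def by blast
  have ex: "R a \<in> range S" using ab[rule_format, of 0] by auto
  define a0 where "a0 = (LEAST a. R a \<in> range S)"
  have a0: "R a0 \<in> range S" using LeastI[of "\<lambda>a. R a \<in> range S", OF ex] unfolding a0_def .
  have a0min: "R c \<in> range S \<Longrightarrow> a0 \<le> c" for c unfolding a0_def by (rule Least_le)
  obtain b0 where b0: "R a0 = S b0" using a0 by auto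
  define y where "y = R a0"
  have Ty: "ray_to y \<omega> = (\<lambda>i. R (i + a0))" unfolding y_def R_def by (rule ray_to_shift[OF w])
  have Ty2: "ray_to y \<omega> = (\<lambda>i. S (i + b0))" unfolding y_def b0 S_def by (rule ray_to_shift[OF w])
  have ab0: "\<forall>i. R (i + a0) = S (i + b0)" using Ty Ty2 by metis
  have rng: "range R \<inter> range S = range (ray_to y \<omega>)"
  proof
    show "range R \<inter> range S \<subseteq> range (ray_to y \<omega>)"
    proof
      fix z assume "z \<in> range R \<inter> range S"
      then obtain c where c: "z = R c" "R c \<in> range S" by auto
      then have "a0 \<le> c" using a0min by blast
      then have "z = (\<lambda>i. R (i + a0)) (c - a0)" using c by simp
      then show "z \<in> range (ray_to y \<omega>)" using Ty by auto
    qed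
    show "range (ray_to y \<omega>) \<subseteq> range R \<inter> range S"
    proof
      fix z assume "z \<in> range (ray_to y \<omega>)"
      then obtain i where "z = R (i + a0)" using Ty by auto
      moreover have "z = S (i + b0)" using ab0 \<open>z = R (i + a0)\<close> by simp
      ultimately show "z \<in> range R \<inter> range S" by blast
    qed
  qed
  have confl: "confl o' x \<omega> = y"
    unfolding confl_def R_def[symmetric] S_def[symmetric]
  proof (rule the_equality)
    show "range R \<inter> range S = range (ray_to y \<omega>)" by (rule rng)
    fix y' assume "range R \<inter> range S = range (ray_to y' \<omega>)"
    then have e: "range (ray_to y' \<omega>) = range (ray_to y \<omega>)" using rng by simp
    have "y' \<in> range (ray_to y \<omega>)" using e ray_to_mem(2)[OF w, of y'] by (metis rangeI)
    then obtain c where c: "y' = ray_to y \<omega> c" by auto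
    have T': "ray_to y' \<omega> = (\<lambda>i. ray_to y \<omega> (i + c))" unfolding c by (rule ray_to_shift[OF w])
    have "y \<in> range (ray_to y' \<omega>)" using e ray_to_mem(2)[OF w, of y] by (metis rangeI)
    then obtain e' where "ray_to y \<omega> 0 = ray_to y \<omega> (e' + c)" using T' ray_to_mem(2)[OF w, of y] by auto
    then have "0 = e' + c" using ray_inj[OF ray_to_ray[OF w]] by blast
    then show "y' = y" using c ray_to_mem(2)[OF w, of y] by simp
  qed
  have "d o' y = a0" using ray_dist[OF Rr(1), of a0] Rr(2) unfolding y_def by simp
  moreover have "d x y = b0" using ray_dist[OF Sr(1), of b0] Sr(2) b0 unfolding y_def by simp
  ultimately have "pairing adj o' x \<omega> = int a0 - int b0" unfolding pairing_def confl by simp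
  also have "\<dots> = Bus \<omega> o' x" using Bus_char[OF w, of o' a0 x b0] ab0 unfolding R_def S_def by simp
  finally show ?thesis .
qed

lemma K_dummy_marker: True by simp

end

locale rtree = tr adj for adj :: "'v \<Rightarrow> 'v \<Rightarrow> bool" +
  fixes q :: nat and rt :: 'v
  assumes reg: "regular adj (q + 1)"
begin

definition par where "par x = (THE y. adj x y \<and> d rt y + 1 = d rt x)"
definition ch where "ch x = {y. adj x y \<and> d rt y = d rt x + 1}"
definition anc where "anc x i = (par ^^ (d rt x - i)) x"
definition lab where "lab \<rho> x = (SOME f. bij_betw f (ch x) {0..<card (ch x)} \<and>
     (\<rho> (d rt x) = x \<longrightarrow> f (\<rho> (Suc (d rt x))) = 0))"
definition code where "code \<rho> x = map (\<lambda>i. lab \<rho> (anc x i) (anc x (Suc i))) [0..<d rt x]"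
definition W where "W = {w. \<forall>i<length w. w ! i < (if i = 0 then q + 1 else q)}"

lemma par_eq: assumes a: "adj x y" and e: "d rt y + 1 = d rt x" shows "par x = y"
  unfolding par_def
proof (rule the_equality)
  show "adj x y \<and> d rt y + 1 = d rt x" using a e by simp
  fix y' assume "adj x y' \<and> d rt y' + 1 = d rt x"
  then show "y' = y" using parent_unique[of x y' y rt] a e by simp
qed

lemma par_prop: assumes x: "x \<noteq> rt" shows "adj x (par x)" "d rt (par x) + 1 = d rt x"
proof -
  define m where "m = d rt x"
  have m0: "m > 0" using x dist_eq0[of rt x] unfolding m_def by (metis gr0I)
  obtain p where p: "walk adj p m" "p 0 = rt" "p m = x" "\<forall>i\<le>m. d rt (p i) = i"
    using geodesic[of rt x] unfolding m_def by blast
  have "adj (p (m - 1)) (p m)" using p(1) m0 unfolding walk_def by (metis Suc_pred' diff_less zero_less_one)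
  then have a: "adj x (p (m - 1))" using p(3) adj_sym by simp
  have b: "d rt (p (m - 1)) + 1 = d rt x" using p(4) m0 unfolding m_def by simp
  have "par x = p (m - 1)" by (rule par_eq[OF a b])
  then show "adj x (par x)" "d rt (par x) + 1 = d rt x" using a b by auto
qed

lemma ch_par: "y \<in> ch x \<Longrightarrow> par y = x"
  unfolding ch_def by (auto intro: par_eq adj_sym)

lemma ch_not_rt: "y \<in> ch x \<Longrightarrow> y \<noteq> rt"
  unfolding ch_def by auto

lemma par_ch: "x \<noteq> rt \<Longrightarrow> x \<in> ch (par x)"
  using par_prop[of x] adj_sym unfolding ch_def by auto

lemma nb_fin: "finite {y. adj x y}" "card {y. adj x y} = q + 1"
  using reg unfolding regular_def by auto

lemma ch_fin: "finite (ch x)"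
  by (rule finite_subset[OF _ nb_fin(1)[of x]]) (auto simp: ch_def)

lemma ch_card: "card (ch x) = (if x = rt then q + 1 else q)"
proof (cases "x = rt")
  case True
  have "ch x = {y. adj x y}"
  proof (auto simp: ch_def)
    fix y assume "adj x y"
    then have "y \<noteq> rt" using True adj_irr by auto
    then have "d rt y \<noteq> 0" using dist_eq0 by metis
    moreover have "d rt y \<le> 1" using dist_adj \<open>adj x y\<close> True by simp
    ultimately show "d rt y = Suc (d rt x)" using True by simp
  qed
  then show ?thesis using nb_fin True by simp
next
  case False
  have "ch x = {y. adj x y} - {par x}"
  proof (rule set_eqI)
    fix y
    show "y \<in> ch x \<longleftrightarrow> y \<in> {y. adj x y} - {par x}"
    proof
      assume "y \<in> ch x" then show "y \<in> {y. adj x y} - {par x}"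
        using par_prop[OF False] unfolding ch_def by auto
    next
      assume "y \<in> {y. adj x y} - {par x}"
      then have a: "adj x y" "y \<noteq> par x" by auto
      have "\<not> (d rt x = d rt y + 1)" using a par_eq by metis
      then have "d rt y = d rt x + 1" using adj_dist[OF a(1), of rt] by blast
      then show "y \<in> ch x" using a unfolding ch_def by simp
    qed
  qed
  moreover have "par x \<in> {y. adj x y}" using par_prop[OF False] by simp
  ultimately show ?thesis using nb_fin[of x] False by (simp add: card_Diff_singleton)
qed

lemma dpar: "k \<le> d rt x \<Longrightarrow> d rt ((par ^^ k) x) = d rt x - k"
proof (induction k)
  case 0 then show ?case by simp
next
  case (Suc k)
  then have IH: "d rt ((par ^^ k) x) = d rt x - k" by simp
  then have "(par ^^ k) x \<noteq> rt" using Suc.prems by auto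
  then show ?case using par_prop(2)[of "(par ^^ k) x"] IH by simp
qed

lemma anc_depth: "i \<le> d rt x \<Longrightarrow> d rt (anc x i) = i"
  unfolding anc_def using dpar[of "d rt x - i" x] by simp

lemma anc_top: "anc x (d rt x) = x" unfolding anc_def by simp

lemma anc_par: assumes x: "x \<noteq> rt" and i: "i \<le> d rt x - 1" shows "anc (par x) i = anc x i"
proof -
  have dp: "d rt (par x) = d rt x - 1" using par_prop(2)[OF x] by simp
  have "Suc (d rt x - 1 - i) = d rt x - i" using i par_prop(2)[OF x] by simp
  then have "(par ^^ (d rt x - i)) x = (par ^^ (d rt x - 1 - i)) (par x)"
    by (metis funpow_Suc_right o_apply)
  then show ?thesis unfolding anc_def dp by simp
qed

lemma anc_last: assumes x: "x \<noteq> rt" shows "anc x (d rt x - 1) = par x"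
proof -
  have "d rt x - (d rt x - 1) = 1" using par_prop(2)[OF x] by simp
  then show ?thesis unfolding anc_def by simp
qed

lemma code_len: "length (code \<rho> x) = d rt x" unfolding code_def by simp

lemma code_rt: "code \<rho> rt = []" unfolding code_def by simp

lemma code_snoc: assumes x: "x \<noteq> rt" shows "code \<rho> x = code \<rho> (par x) @ [lab \<rho> (par x) x]"
proof -
  define m where "m = d rt (par x)"
  have dx: "d rt x = Suc m" using par_prop(2)[OF x] unfolding m_def by simp
  have "code \<rho> x = map (\<lambda>i. lab \<rho> (anc x i) (anc x (Suc i))) [0..<m] @ [lab \<rho> (anc x m) (anc x (Suc m))]"
    unfolding code_def dx by simp
  moreover have "map (\<lambda>i. lab \<rho> (anc x i) (anc x (Suc i))) [0..<m] = code \<rho> (par x)"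
    unfolding code_def m_def[symmetric]
    by (rule map_cong) (use anc_par[OF x] dx in auto)
  moreover have "anc x m = par x" using anc_last[OF x] dx by simp
  moreover have "anc x (Suc m) = x" using anc_top[of x] dx by simp
  ultimately show ?thesis by simp
qed

lemma lab_ex: assumes A: "finite A" "a \<in> A" shows "\<exists>f. bij_betw f A {0..<card A} \<and> f a = 0"
proof -
  obtain h where h: "bij_betw h A {0..<card A}" using ex_bij_betw_finite_nat[OF A(1)] by blast
  have "card A > 0" using A card_gt_0_iff by blast
  then have "0 \<in> h ` A" using bij_betw_imp_surj_on[OF h] by simp
  then obtain b where b: "b \<in> A" "h b = 0" by auto
  have "bij_betw (Fun.swap a b h) A {0..<card A}" by (rule iffD2[OF bij_betw_swap_iff[OF A(2) b(1)] h])
  moreover have "Fun.swap a b h a = 0" using b by simp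
  ultimately show ?thesis by blast
qed

context
  fixes \<rho> assumes \<rho>: "is_ray adj \<rho>" "\<rho> 0 = rt"
begin

lemma lab_props: "bij_betw (lab \<rho> x) (ch x) {0..<card (ch x)}"
   "\<rho> (d rt x) = x \<Longrightarrow> lab \<rho> x (\<rho> (Suc (d rt x))) = 0"
proof -
  have "\<exists>f. bij_betw f (ch x) {0..<card (ch x)} \<and> (\<rho> (d rt x) = x \<longrightarrow> f (\<rho> (Suc (d rt x))) = 0)"
  proof (cases "\<rho> (d rt x) = x")
    case True
    have "\<rho> (Suc (d rt x)) \<in> ch x"
      using ray_adj[OF \<rho>(1), of "d rt x"] ray_dist[OF \<rho>(1), of "Suc (d rt x)"] True \<rho>(2)
      unfolding ch_def by simp
    then show ?thesis using lab_ex[OF ch_fin] by blast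
  next
    case False
    then show ?thesis using ex_bij_betw_finite_nat[OF ch_fin] by blast
  qed
  from someI_ex[OF this] show "bij_betw (lab \<rho> x) (ch x) {0..<card (ch x)}"
    "\<rho> (d rt x) = x \<Longrightarrow> lab \<rho> x (\<rho> (Suc (d rt x))) = 0"
    unfolding lab_def by blast+
qed

lemma lab_lt: "y \<in> ch x \<Longrightarrow> lab \<rho> x y < card (ch x)"
  using bij_betw_apply[OF lab_props(1)] by fastforce

lemma code_W: "code \<rho> x \<in> W"
proof -
  have "\<forall>x. d rt x = n \<longrightarrow> code \<rho> x \<in> W" for n
  proof (induction n)
    case 0
    show ?case
    proof (intro allI impI)
      fix x assume "d rt x = 0"
      then have "rt = x" using dist_eq0 by blast
      then show "code \<rho> x \<in> W" using code_rt[of \<rho>] by (simp add: W_def)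
    qed
  next
    case (Suc n)
    show ?case
    proof (intro allI impI)
      fix x assume dx: "d rt x = Suc n"
      then have x: "x \<noteq> rt" by auto
      have dp: "d rt (par x) = n" using par_prop(2)[OF x] dx by simp
      have w: "code \<rho> (par x) \<in> W" using Suc.IH dp by blast
      have c: "lab \<rho> (par x) x < (if n = 0 then q + 1 else q)"
        using lab_lt[OF par_ch[OF x]] ch_card[of "par x"] dp dist_eq0[of rt "par x"] by (auto split: if_splits)
      show "code \<rho> x \<in> W"
        unfolding code_snoc[OF x] W_def
      proof (intro CollectI allI impI)
        fix i assume i: "i < length (code \<rho> (par x) @ [lab \<rho> (par x) x])"
        show "(code \<rho> (par x) @ [lab \<rho> (par x) x]) ! i < (if i = 0 then q + 1 else q)"
        proof (cases "i < n")
          case True then show ?thesis using w code_len[of \<rho> "par x"] dp unfolding W_def by (simp add: nth_append)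
        next
          case False then have "i = n" using i code_len[of \<rho> "par x"] dp by simp
          then show ?thesis using c code_len[of \<rho> "par x"] dp by (simp add: nth_append)
        qed
      qed
    qed
  qed
  then show ?thesis by blast
qed

lemma code_inj: "code \<rho> x = code \<rho> y \<Longrightarrow> x = y"
proof -
  have "\<forall>x y. d rt x = n \<longrightarrow> code \<rho> x = code \<rho> y \<longrightarrow> x = y" for n
  proof (induction n)
    case 0
    show ?case
    proof (intro allI impI)
      fix x y assume "d rt x = 0" "code \<rho> x = code \<rho> y"
      then have "d rt y = 0" using code_len by metis
      then show "x = y" using \<open>d rt x = 0\<close> dist_eq0 by metis
    qed
  next
    case (Suc n)
    show ?case
    proof (intro allI impI)
      fix x y assume dx: "d rt x = Suc n" and e: "code \<rho> x = code \<rho> y"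
      then have dy: "d rt y = Suc n" using code_len by metis
      have x: "x \<noteq> rt" and y: "y \<noteq> rt" using dx dy by auto
      from e have "code \<rho> (par x) = code \<rho> (par y)" "lab \<rho> (par x) x = lab \<rho> (par y) y"
        unfolding code_snoc[OF x] code_snoc[OF y] by auto
      moreover have "d rt (par x) = n" using par_prop(2)[OF x] dx by simp
      ultimately have p: "par x = par y" "lab \<rho> (par x) x = lab \<rho> (par x) y" using Suc.IH by auto
      have "x \<in> ch (par x)" "y \<in> ch (par x)" using par_ch[OF x] par_ch[OF y] p by auto
      then show "x = y" using p(2) bij_betw_imp_inj_on[OF lab_props(1)] by (metis inj_onD)
    qed
  qed
  then show "code \<rho> x = code \<rho> y \<Longrightarrow> x = y" by blast
qed

lemma code_surj: "w \<in> W \<Longrightarrow> \<exists>x. code \<rho> x = w"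
proof (induction w rule: rev_induct)
  case Nil then show ?case using code_rt by blast
next
  case (snoc c w)
  have P: "\<forall>i<length (w @ [c]). (w @ [c]) ! i < (if i = 0 then q + 1 else q)"
    using snoc.prems unfolding W_def by simp
  have "w \<in> W" unfolding W_def
  proof (intro CollectI allI impI)
    fix i assume "i < length w"
    then show "w ! i < (if i = 0 then q + 1 else q)" using P[rule_format, of i] by (simp add: nth_append)
  qed
  then obtain x where x: "code \<rho> x = w" using snoc.IH by blast
  have "c < (if length w = 0 then q + 1 else q)"
    using P[rule_format, of "length w"] by simp
  moreover have "length w = 0 \<longleftrightarrow> x = rt" using x code_len dist_eq0 by (metis dist_self)
  ultimately have "c < card (ch x)" using ch_card by simp
  then have "c \<in> lab \<rho> x ` ch x" using bij_betw_imp_surj_on[OF lab_props(1)] by simp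
  then obtain y where y: "y \<in> ch x" "lab \<rho> x y = c" by auto
  have "code \<rho> y = code \<rho> x @ [c]" using code_snoc[OF ch_not_rt[OF y(1)]] ch_par[OF y(1)] y by simp
  then show ?case using x by blast
qed

lemma code_adj: "adj x y \<longleftrightarrow> (\<exists>c. code \<rho> y = code \<rho> x @ [c]) \<or> (\<exists>c. code \<rho> x = code \<rho> y @ [c])"
proof
  assume a: "adj x y"
  from adj_dist[OF a, of rt] show "(\<exists>c. code \<rho> y = code \<rho> x @ [c]) \<or> (\<exists>c. code \<rho> x = code \<rho> y @ [c])"
  proof
    assume h: "d rt y = d rt x + 1"
    then have "y \<noteq> rt" by auto
    moreover have "par y = x" using par_eq[OF adj_sym[OF a]] h by simp
    ultimately show ?thesis using code_snoc by metis
  next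
    assume h: "d rt x = d rt y + 1"
    then have "x \<noteq> rt" by auto
    moreover have "par x = y" using par_eq[OF a] h by simp
    ultimately show ?thesis using code_snoc by metis
  qed
next
  have one: "adj x y" if c: "code \<rho> y = code \<rho> x @ [c]" for x y c
  proof -
    have "d rt y = d rt x + 1" using c code_len by (metis length_append_singleton Suc_eq_plus1)
    then have y: "y \<noteq> rt" by auto
    then have "code \<rho> (par y) = code \<rho> x" using c code_snoc[OF y] by simp
    then have "par y = x" by (rule code_inj)
    then show ?thesis using par_prop(1)[OF y] adj_sym by simp
  qed
  assume "(\<exists>c. code \<rho> y = code \<rho> x @ [c]) \<or> (\<exists>c. code \<rho> x = code \<rho> y @ [c])"
  then show "adj x y" using one adj_sym by blast
qed

lemma code_ray: "code \<rho> (\<rho> i) = replicate i 0"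
proof (induction i)
  case 0 then show ?case using code_rt \<rho>(2) by simp
next
  case (Suc i)
  have di: "d rt (\<rho> i) = i" "d rt (\<rho> (Suc i)) = Suc i" using ray_dist[OF \<rho>(1)] \<rho>(2) by auto
  then have ne: "\<rho> (Suc i) \<noteq> rt" by auto
  have p: "par (\<rho> (Suc i)) = \<rho> i" using par_eq[OF adj_sym[OF ray_adj[OF \<rho>(1)]]] di by simp
  have "lab \<rho> (\<rho> i) (\<rho> (Suc i)) = 0" using lab_props(2)[of "\<rho> i"] di by simp
  then show ?case using code_snoc[OF ne] p Suc.IH by (simp add: replicate_append_same)
qed

end

lemma K_trans_rays:
  assumes r1: "is_ray adj \<rho>1" "\<rho>1 0 = rt" and r2: "is_ray adj \<rho>2" "\<rho>2 0 = rt"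
  shows "\<exists>k. k \<in> aut adj \<and> k rt = rt \<and> (\<forall>i. k (\<rho>1 i) = \<rho>2 i)"
proof -
  define k where "k = inv_into UNIV (code \<rho>2) \<circ> code \<rho>1"
  have inW: "code \<rho>1 x \<in> range (code \<rho>2)" for x
  proof -
    obtain z where "code \<rho>2 z = code \<rho>1 x" using code_surj[OF r2 code_W[OF r1]] by blast
    then show ?thesis by (metis rangeI)
  qed
  have ck: "code \<rho>2 (k x) = code \<rho>1 x" for x unfolding k_def using f_inv_into_f[OF inW] by simp
  have inj: "inj k" using ck code_inj[OF r1] by (metis injI)
  have surj: "surj k"
  proof
    show "range k \<subseteq> UNIV" by simp
    show "UNIV \<subseteq> range k"
    proof
      fix y
      obtain x where "code \<rho>1 x = code \<rho>2 y" using code_surj[OF r1 code_W[OF r2]] by blast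
      then have "k x = y" using ck code_inj[OF r2] by metis
      then show "y \<in> range k" by blast
    qed
  qed
  have "adj x y \<longleftrightarrow> adj (k x) (k y)" for x y
    using code_adj[OF r1, of x y] code_adj[OF r2, of "k x" "k y"] ck by simp
  then have "k \<in> aut adj" unfolding aut_def using inj surj bij_def by blast
  moreover have "k rt = rt" using ck[of rt] code_rt code_inj[OF r2] by metis
  moreover have "k (\<rho>1 i) = \<rho>2 i" for i using ck[of "\<rho>1 i"] code_ray[OF r1] code_ray[OF r2] code_inj[OF r2] by metis
  ultimately show ?thesis by blast
qed

lemma K_trans:
  assumes w1: "\<omega>1 \<in> boundary adj" and w2: "\<omega>2 \<in> boundary adj"
  shows "\<exists>k. k \<in> aut adj \<and> k rt = rt \<and> bact k \<omega>1 = \<omega>2"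
proof -
  define \<rho>1 where "\<rho>1 = ray_to rt \<omega>1"
  define \<rho>2 where "\<rho>2 = ray_to rt \<omega>2"
  have r1: "is_ray adj \<rho>1" "\<rho>1 0 = rt" "\<rho>1 \<in> \<omega>1" using ray_to_ray[OF w1] ray_to_mem[OF w1] unfolding \<rho>1_def by auto
  have r2: "is_ray adj \<rho>2" "\<rho>2 0 = rt" "\<rho>2 \<in> \<omega>2" using ray_to_ray[OF w2] ray_to_mem[OF w2] unfolding \<rho>2_def by auto
  obtain k where k: "k \<in> aut adj" "k rt = rt" "\<forall>i. k (\<rho>1 i) = \<rho>2 i" using K_trans_rays[OF r1(1,2) r2(1,2)] by blast
  have "k \<circ> \<rho>1 = \<rho>2" using k(3) by auto
  then have "bact k \<omega>1 = \<omega>2"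
    using bact_cls[OF k(1) r1(1)] bdry_mem_cls[OF w1 r1(3)] bdry_mem_cls[OF w2 r2(3)] by simp
  then show ?thesis using k by blast
qed

end


context tr begin

lemma fixv: assumes n: "n \<in> aut adj" and w: "\<omega> \<in> boundary adj" and nw: "bact n \<omega> = \<omega>"
  and B: "Bus \<omega> x (n x) = 0" shows "\<exists>v. n v = v"
proof -
  obtain a b where ab: "\<forall>i. ray_to x \<omega> (i + a) = ray_to (n x) \<omega> (i + b)" using Bus_ex[OF w] by blast
  have "int a - int b = 0" using Bus_char[OF w ab] B by simp
  then have "a = b" by simp
  have "ray_to (n x) \<omega> = n \<circ> ray_to x \<omega>" using ray_to_bact[OF n w, of x] nw by simp
  then have "n (ray_to x \<omega> a) = ray_to x \<omega> a" using ab[rule_format, of 0] \<open>a = b\<close> by simp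
  then show ?thesis by blast
qed

lemma comp_funpow_id: fixes f g :: "'a \<Rightarrow> 'a" shows "g \<circ> f = id \<Longrightarrow> (g ^^ m) \<circ> (f ^^ m) = id"
proof (induction m)
  case 0 then show ?case by simp
next
  case (Suc m)
  have e1: "g ^^ Suc m = g ^^ m \<circ> g" by (rule funpow_Suc_right)
  have e2: "f ^^ Suc m = f \<circ> f ^^ m" by simp
  have "(g ^^ Suc m) \<circ> (f ^^ Suc m) = (g ^^ m) \<circ> (g \<circ> f) \<circ> (f ^^ m)"
    unfolding e1 e2 by (simp only: comp_assoc)
  also have "\<dots> = (g ^^ m) \<circ> (f ^^ m)" using Suc.prems by (simp only: comp_id)
  also have "\<dots> = id" by (rule Suc.IH[OF Suc.prems])
  finally show ?case .
qed

lemma aut_funpow: "f \<in> aut adj \<Longrightarrow> f ^^ m \<in> aut adj"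
  by (induction m) (auto simp: aut_id aut_comp)

lemma bact_funpow: "bact f \<omega> = \<omega> \<Longrightarrow> bact (f ^^ m) \<omega> = \<omega>"
  by (induction m) (auto simp: bact_id bact_comp)

lemma bact_inv: assumes f: "f \<in> aut adj" and e: "bact f \<omega> = \<omega>" shows "bact (inv f) \<omega> = \<omega>"
proof -
  have "inv f \<circ> f = id" using aut_bij[OF f] by (simp add: bij_is_inj)
  have "bact (inv f) (bact f \<omega>) = bact (inv f \<circ> f) \<omega>" by (simp only: bact_comp)
  also have "\<dots> = \<omega>" using \<open>inv f \<circ> f = id\<close> bact_id by simp
  finally show ?thesis using e by simp
qed

lemma tpow_aut: "t \<in> aut adj \<Longrightarrow> tpow t j \<in> aut adj"
  unfolding tpow_def using aut_funpow aut_inv by auto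

lemma tpow_bact: assumes t: "t \<in> aut adj" and e: "bact t \<omega> = \<omega>" shows "bact (tpow t j) \<omega> = \<omega>"
proof -
  have ei: "bact (inv t) \<omega> = \<omega>" by (rule bact_inv[OF t e])
  show ?thesis unfolding tpow_def using bact_funpow[OF e] bact_funpow[OF ei] by simp
qed

lemma tpow_cancel: assumes t: "t \<in> aut adj" shows "tpow t (- j) \<circ> tpow t j = id"
proof -
  have b: "bij t" using aut_bij[OF t] .
  have i1: "inv t \<circ> t = id" using b by (simp add: bij_is_inj)
  have i2: "t \<circ> inv t = id" using b bij_is_surj surj_iff by blast
  show ?thesis
  proof (cases "j = 0")
    case True then show ?thesis unfolding tpow_def by simp
  next
    case False
    show ?thesis
    proof (cases "j > 0")
      case True then show ?thesis unfolding tpow_def using comp_funpow_id[OF i1] by simp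
    next
      case False then show ?thesis using \<open>j \<noteq> 0\<close> unfolding tpow_def using comp_funpow_id[OF i2] by simp
    qed
  qed
qed

end

locale S = rtree adj q o' for adj :: "'v \<Rightarrow> 'v \<Rightarrow> bool" and q o' +
  fixes \<omega>m \<omega>p :: "(nat \<Rightarrow> 'v) set" and t r :: "'v \<Rightarrow> 'v" and l :: "int \<Rightarrow> 'v" and c :: int
  assumes bm: "\<omega>m \<in> boundary adj" and bp: "\<omega>p \<in> boundary adj"
   and line: "is_line adj \<omega>m \<omega>p l" and oc: "o' = l c"
   and t_aut: "t \<in> aut adj" and t_fix: "bact t \<omega>m = \<omega>m" "bact t \<omega>p = \<omega>p"
   and t_tr: "\<forall>k. t (l k) = l (k + 1)"
   and r_K: "r \<in> stabK adj o'" and r_inv: "r \<circ> r = id" and r_conj: "\<forall>j. r \<circ> tpow t j \<circ> inv r = tpow t (- j)"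
begin

lemma l_adj: "adj (l k) (l (k + 1))" using line unfolding is_line_def by blast
lemma l_nb: "l k \<noteq> l (k + 2)" using line unfolding is_line_def by blast

lemma rp_ray: "is_ray adj (\<lambda>i. l (a + int i))"
  unfolding is_ray_def
proof (intro allI conjI)
  fix i
  have e1: "a + int (Suc i) = (a + int i) + 1" by simp
  have e2: "a + int (i + 2) = (a + int i) + 2" by simp
  show "adj (l (a + int i)) (l (a + int (Suc i)))" unfolding e1 by (rule l_adj)
  show "l (a + int i) \<noteq> l (a + int (i + 2))" unfolding e2 by (rule l_nb)
qed

lemma rm_ray: "is_ray adj (\<lambda>i. l (a - int i))"
  unfolding is_ray_def
proof (intro allI conjI)
  fix i
  have e1: "a - int i = (a - int (Suc i)) + 1" by simp
  have e2: "a - int i = (a - int (i + 2)) + 2" by simp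
  show "adj (l (a - int i)) (l (a - int (Suc i)))" unfolding e1 by (rule adj_sym[OF l_adj])
  show "l (a - int i) \<noteq> l (a - int (i + 2))" unfolding e2 using l_nb by metis
qed

lemma rp_mem: "(\<lambda>i. l (a + int i)) \<in> \<omega>p"
proof -
  have g: "(\<lambda>i. l (int i)) \<in> \<omega>p" using line unfolding is_line_def by blast
  have "ray_equiv (\<lambda>i. l (int i)) (\<lambda>i. l (a + int i))"
    unfolding ray_equiv_def
  proof (cases "a \<ge> 0")
    case True
    show "\<exists>k m. \<forall>i. l (int (i + k)) = l (a + int (i + m))"
      by (rule exI[of _ "nat a"], rule exI[of _ 0]) (use True in \<open>simp add: ac_simps\<close>)
  next
    case False
    show "\<exists>k m. \<forall>i. l (int (i + k)) = l (a + int (i + m))"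
      by (rule exI[of _ 0], rule exI[of _ "nat (- a)"]) (use False in \<open>simp add: ac_simps\<close>)
  qed
  then show ?thesis by (rule bdry_add[OF bp g rp_ray])
qed

lemma rm_mem: "(\<lambda>i. l (a - int i)) \<in> \<omega>m"
proof -
  have g: "(\<lambda>i. l (- int i)) \<in> \<omega>m" using line unfolding is_line_def by blast
  have "ray_equiv (\<lambda>i. l (- int i)) (\<lambda>i. l (a - int i))"
    unfolding ray_equiv_def
  proof (cases "a \<ge> 0")
    case True
    show "\<exists>k m. \<forall>i. l (- int (i + k)) = l (a - int (i + m))"
      by (rule exI[of _ 0], rule exI[of _ "nat a"]) (use True in \<open>simp add: ac_simps\<close>)
  next
    case False
    show "\<exists>k m. \<forall>i. l (- int (i + k)) = l (a - int (i + m))"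
      by (rule exI[of _ "nat (- a)"], rule exI[of _ 0]) (use False in \<open>simp add: ac_simps\<close>)
  qed
  then show ?thesis by (rule bdry_add[OF bm g rm_ray])
qed

lemma rto_p: "ray_to (l a) \<omega>p = (\<lambda>i. l (a + int i))"
  by (rule ray_to_eq[OF bp rp_mem]) simp

lemma rto_m: "ray_to (l a) \<omega>m = (\<lambda>i. l (a - int i))"
  by (rule ray_to_eq[OF bm rm_mem]) simp

lemma Bus_p: "Bus \<omega>p (l a) (l b) = b - a"
proof (cases "a \<le> b")
  case True
  have h: "\<forall>i. ray_to (l a) \<omega>p (i + nat (b - a)) = ray_to (l b) \<omega>p (i + 0)"
    unfolding rto_p using True by (simp add: algebra_simps)
  then show ?thesis using Bus_char[OF bp h] True by simp
next
  case False
  have h: "\<forall>i. ray_to (l a) \<omega>p (i + 0) = ray_to (l b) \<omega>p (i + nat (a - b))"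
    unfolding rto_p using False by (simp add: algebra_simps)
  then show ?thesis using Bus_char[OF bp h] False by simp
qed

lemma Bus_m: "Bus \<omega>m (l a) (l b) = a - b"
proof (cases "b \<le> a")
  case True
  have h: "\<forall>i. ray_to (l a) \<omega>m (i + nat (a - b)) = ray_to (l b) \<omega>m (i + 0)"
    unfolding rto_m using True by (simp add: algebra_simps)
  then show ?thesis using Bus_char[OF bm h] True by simp
next
  case False
  have h: "\<forall>i. ray_to (l a) \<omega>m (i + 0) = ray_to (l b) \<omega>m (i + nat (b - a))"
    unfolding rto_m using False by (simp add: algebra_simps)
  then show ?thesis using Bus_char[OF bm h] False by simp
qed

lemma t_inv_l: "inv t (l k) = l (k - 1)"
proof -
  have "t (l (k - 1)) = l k" using t_tr by simp
  then show ?thesis using aut_bij[OF t_aut] by (metis bij_is_inj inv_f_eq)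
qed

lemma tpow_l: "tpow t j (l k) = l (k + j)"
proof -
  have A: "(t ^^ m) (l k) = l (k + int m)" for m k
    by (induction m) (simp_all add: t_tr ac_simps)
  have B: "(inv t ^^ m) (l k) = l (k - int m)" for m k
    by (induction m) (simp_all add: t_inv_l algebra_simps)
  show ?thesis unfolding tpow_def using A B by simp
qed

lemma r_aut: "r \<in> aut adj" and r_o: "r o' = o'" using r_K unfolding stabK_def by auto

lemma inv_r: "inv r = r" using r_inv by (simp add: inv_unique_comp)

lemma rtr: "r (t (r x)) = inv t x"
proof -
  have "r \<circ> tpow t 1 \<circ> inv r = tpow t (- 1)" using r_conj by blast
  then have "r \<circ> t \<circ> r = inv t" unfolding tpow_def inv_r by simp
  then show ?thesis by (metis comp_apply)
qed

lemma r_wp: "bact r \<omega>p = \<omega>m"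
proof -
  define \<rho> where "\<rho> = (\<lambda>i. l (c + int i))"
  have rr: "r (r x) = x" for x using r_inv by (metis comp_apply id_apply)
  have "r (\<rho> i) = l (c - int i)" for i
  proof (induction i)
    case 0 then show ?case using r_o oc \<rho>_def by simp
  next
    case (Suc i)
    have "\<rho> (Suc i) = t (\<rho> i)" unfolding \<rho>_def using t_tr by (simp add: ac_simps)
    then have "r (\<rho> (Suc i)) = r (t (r (r (\<rho> i))))" using rr by simp
    also have "\<dots> = inv t (r (\<rho> i))" by (rule rtr)
    also have "\<dots> = l (c - int (Suc i))" using Suc t_inv_l by (simp add: algebra_simps)
    finally show ?case .
  qed
  then have "r \<circ> \<rho> = (\<lambda>i. l (c - int i))" by auto
  then show ?thesis
    using bact_cls[OF r_aut rp_ray[of c]] bdry_mem_cls[OF bp rp_mem[of c]] bdry_mem_cls[OF bm rm_mem[of c]]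
    unfolding \<rho>_def by simp
qed

definition Phi where "Phi g = Bus (bact g \<omega>p) o' (g o')"

lemma Phi_decomp: assumes k: "k \<in> stabK adj o'" and n: "n \<in> Bplus adj \<omega>p" and g: "g = k \<circ> n \<circ> tpow t j"
  shows "Phi g = j"
proof -
  have ka: "k \<in> aut adj" "k o' = o'" using k unfolding stabK_def by auto
  have na: "n \<in> aut adj" "bact n \<omega>p = \<omega>p" using n unfolding Bplus_def by auto
  obtain v where v: "n v = v" using n unfolding Bplus_def by auto
  have bt: "bact (tpow t j) \<omega>p = \<omega>p" using tpow_bact[OF t_aut t_fix(2)] .
  have bg: "bact g \<omega>p = bact k \<omega>p" unfolding g by (simp add: bact_comp bt na(2))
  have "Phi g = Bus (bact k \<omega>p) (k o') (k (n (tpow t j o')))" unfolding Phi_def bg using ka g by simp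
  also have "\<dots> = Bus \<omega>p o' (n (tpow t j o'))" by (rule Bus_aut[OF ka(1) bp])
  also have "\<dots> = Bus \<omega>p o' (n o') + Bus \<omega>p (n o') (n (tpow t j o'))" by (rule Bus_cocycle[OF bp])
  also have "Bus \<omega>p (n o') (n (tpow t j o')) = Bus \<omega>p o' (tpow t j o')"
    using Bus_aut[OF na(1) bp] na(2) by metis
  also have "Bus \<omega>p o' (tpow t j o') = j" unfolding oc tpow_l Bus_p by simp
  also have "Bus \<omega>p o' (n o') = 0"
  proof -
    have "Bus \<omega>p o' (n o') = Bus \<omega>p o' v + Bus \<omega>p v (n o')" by (rule Bus_cocycle[OF bp])
    also have "Bus \<omega>p v (n o') = Bus \<omega>p v o'" using Bus_aut[OF na(1) bp, of v o'] na(2) v by simp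
    also have "Bus \<omega>p o' v + Bus \<omega>p v o' = 0" using Bus_cocycle[OF bp, of o' o' v] Bus_self[OF bp] by simp
    finally show ?thesis .
  qed
  finally show ?thesis by simp
qed

lemma Phi_exists: assumes g: "g \<in> aut adj"
  shows "\<exists>k n. k \<in> stabK adj o' \<and> n \<in> Bplus adj \<omega>p \<and> g = k \<circ> n \<circ> tpow t (Phi g)"
proof -
  define \<xi> where "\<xi> = bact g \<omega>p"
  have \<xi>: "\<xi> \<in> boundary adj" unfolding \<xi>_def by (rule bact_bdry[OF g bp])
  obtain k where k: "k \<in> aut adj" "k o' = o'" "bact k \<omega>p = \<xi>" using K_trans[OF bp \<xi>] by blast
  define j where "j = Phi g"
  define n where "n = inv k \<circ> g \<circ> tpow t (- j)"
  have kb: "bij k" using aut_bij[OF k(1)] .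
  have kik: "k \<circ> inv k = id" using kb bij_is_surj surj_iff by blast
  have iki: "inv k \<circ> k = id" using kb by (simp add: bij_is_inj)
  have ik: "inv k \<in> aut adj" by (rule aut_inv[OF k(1)])
  have na: "n \<in> aut adj" unfolding n_def by (intro aut_comp ik g tpow_aut t_aut)
  have nw: "bact n \<omega>p = \<omega>p"
  proof -
    have "bact n \<omega>p = bact (inv k) (bact g (bact (tpow t (- j)) \<omega>p))" unfolding n_def by (simp add: bact_comp)
    also have "\<dots> = bact (inv k) (bact k \<omega>p)" using tpow_bact[OF t_aut t_fix(2)] k(3) \<xi>_def by simp
    also have "\<dots> = \<omega>p" using bact_comp[of "inv k" k] iki bact_id by metis
    finally show ?thesis .
  qed
  have "Bus \<omega>p o' (n o') = 0"
  proof -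
    define y where "y = g (tpow t (- j) o')"
    have "n o' = inv k y" unfolding n_def y_def by simp
    have "Bus \<omega>p o' (inv k y) = Bus (bact k \<omega>p) (k o') (k (inv k y))" by (rule Bus_aut[OF k(1) bp, symmetric])
    also have "\<dots> = Bus \<xi> o' y" using k(2,3) kik by (metis comp_apply id_apply)
    also have "\<dots> = Bus \<xi> o' (g o') + Bus \<xi> (g o') y" by (rule Bus_cocycle[OF \<xi>])
    also have "Bus \<xi> (g o') y = Bus \<omega>p o' (tpow t (- j) o')" unfolding \<xi>_def y_def by (rule Bus_aut[OF g bp])
    also have "\<dots> = - j" unfolding oc tpow_l Bus_p by simp
    also have "Bus \<xi> o' (g o') = j" unfolding j_def Phi_def \<xi>_def ..
    finally show ?thesis using \<open>n o' = inv k y\<close> by simp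
  qed
  then obtain v where "n v = v" using fixv[OF na bp nw] by blast
  then have nB: "n \<in> Bplus adj \<omega>p" unfolding Bplus_def using na nw by blast
  have kK: "k \<in> stabK adj o'" unfolding stabK_def using k by simp
  have "k \<circ> n \<circ> tpow t j = (k \<circ> inv k) \<circ> g \<circ> (tpow t (- j) \<circ> tpow t j)" unfolding n_def by (simp add: comp_assoc)
  also have "\<dots> = g" using kik tpow_cancel[OF t_aut] by simp
  finally show ?thesis using nB kK j_def by metis
qed

lemma Hc_Phi: assumes g: "g \<in> aut adj" shows "Hc adj o' \<omega>p t g = Phi g"
  unfolding Hc_def
proof (rule the_equality)
  show "\<exists>k n. k \<in> stabK adj o' \<and> n \<in> Bplus adj \<omega>p \<and> g = k \<circ> n \<circ> tpow t (Phi g)" by (rule Phi_exists[OF g])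
  fix j assume "\<exists>k n. k \<in> stabK adj o' \<and> n \<in> Bplus adj \<omega>p \<and> g = k \<circ> n \<circ> tpow t j"
  then show "j = Phi g" using Phi_decomp by metis
qed

lemma Phi_r: "g \<in> aut adj \<Longrightarrow> Phi (g \<circ> r) = Bus (bact g \<omega>m) o' (g o')"
  unfolding Phi_def by (simp add: bact_comp r_wp r_o)

lemma part1a: assumes g: "g \<in> aut adj" and g': "g' \<in> aut adj"
  shows "Phi (g' \<circ> g) = pairing adj o' (g' o') (bact (g' \<circ> g) \<omega>p) + Phi g"
proof -
  define \<Xi> where "\<Xi> = bact (g' \<circ> g) \<omega>p"
  have X: "\<Xi> \<in> boundary adj" unfolding \<Xi>_def by (rule bact_bdry[OF aut_comp[OF g' g] bp])
  have "Phi (g' \<circ> g) = Bus \<Xi> o' (g' o') + Bus \<Xi> (g' o') (g' (g o'))"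
    unfolding Phi_def \<Xi>_def[symmetric] using Bus_cocycle[OF X] by simp
  also have "Bus \<Xi> (g' o') (g' (g o')) = Phi g"
    unfolding \<Xi>_def Phi_def bact_comp by (rule Bus_aut[OF g' bact_bdry[OF g bp]])
  also have "Bus \<Xi> o' (g' o') = pairing adj o' (g' o') \<Xi>" by (rule pairing_Bus[OF X, symmetric])
  finally show ?thesis unfolding \<Xi>_def .
qed

lemma part1b: assumes g: "g \<in> aut adj" and g': "g' \<in> aut adj"
  shows "Phi ((g' \<circ> g) \<circ> r) = pairing adj o' (g' o') (bact (g' \<circ> g) \<omega>m) + Phi (g \<circ> r)"
proof -
  define \<Xi> where "\<Xi> = bact (g' \<circ> g) \<omega>m"
  have X: "\<Xi> \<in> boundary adj" unfolding \<Xi>_def by (rule bact_bdry[OF aut_comp[OF g' g] bm])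
  have "Phi ((g' \<circ> g) \<circ> r) = Bus \<Xi> o' (g' (g o'))"
    unfolding Phi_r[OF aut_comp[OF g' g]] \<Xi>_def by simp
  also have "\<dots> = Bus \<Xi> o' (g' o') + Bus \<Xi> (g' o') (g' (g o'))" by (rule Bus_cocycle[OF X])
  also have "Bus \<Xi> (g' o') (g' (g o')) = Phi (g \<circ> r)"
    unfolding \<Xi>_def Phi_r[OF g] bact_comp by (rule Bus_aut[OF g' bact_bdry[OF g bm]])
  also have "Bus \<Xi> o' (g' o') = pairing adj o' (g' o') \<Xi>" by (rule pairing_Bus[OF X, symmetric])
  finally show ?thesis unfolding \<Xi>_def .
qed

lemma part2a: assumes g: "g \<in> aut adj" shows "Phi (g \<circ> tpow t n) = Phi g + n"
proof -
  define \<xi> where "\<xi> = bact g \<omega>p"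
  have X: "\<xi> \<in> boundary adj" unfolding \<xi>_def by (rule bact_bdry[OF g bp])
  have "Phi (g \<circ> tpow t n) = Bus \<xi> o' (g (tpow t n o'))"
    unfolding Phi_def \<xi>_def bact_comp tpow_bact[OF t_aut t_fix(2)] by simp
  also have "\<dots> = Bus \<xi> o' (g o') + Bus \<xi> (g o') (g (tpow t n o'))" by (rule Bus_cocycle[OF X])
  also have "Bus \<xi> (g o') (g (tpow t n o')) = Bus \<omega>p o' (tpow t n o')" unfolding \<xi>_def by (rule Bus_aut[OF g bp])
  also have "\<dots> = n" unfolding oc tpow_l Bus_p by simp
  finally show ?thesis unfolding Phi_def \<xi>_def .
qed

lemma part2b: assumes g: "g \<in> aut adj" shows "Phi ((g \<circ> tpow t n) \<circ> r) = Phi (g \<circ> r) - n"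
proof -
  define \<xi> where "\<xi> = bact g \<omega>m"
  have X: "\<xi> \<in> boundary adj" unfolding \<xi>_def by (rule bact_bdry[OF g bm])
  have ga: "g \<circ> tpow t n \<in> aut adj" by (rule aut_comp[OF g tpow_aut[OF t_aut]])
  have "Phi ((g \<circ> tpow t n) \<circ> r) = Bus \<xi> o' (g (tpow t n o'))"
    unfolding Phi_r[OF ga] \<xi>_def bact_comp tpow_bact[OF t_aut t_fix(1)] by simp
  also have "\<dots> = Bus \<xi> o' (g o') + Bus \<xi> (g o') (g (tpow t n o'))" by (rule Bus_cocycle[OF X])
  also have "Bus \<xi> (g o') (g (tpow t n o')) = Bus \<omega>m o' (tpow t n o')" unfolding \<xi>_def by (rule Bus_aut[OF g bm])
  also have "\<dots> = - n" unfolding oc tpow_l Bus_m by simp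
  finally have F: "Phi ((g \<circ> tpow t n) \<circ> r) = Bus \<xi> o' (g o') + - n" .
  have "Phi (g \<circ> r) = Bus \<xi> o' (g o')" unfolding \<xi>_def by (rule Phi_r[OF g])
  then show ?thesis using F by linarith
qed

end


theorem lemma3p2:
  fixes adj :: "'v \<Rightarrow> 'v \<Rightarrow> bool" and q :: nat and o' :: 'v
    and \<omega>m \<omega>p :: "(nat \<Rightarrow> 'v) set" and t r g g' :: "'v \<Rightarrow> 'v"
    and s s' :: complex and n :: int
  assumes q: "q \<ge> 2"
    and tree: "is_tree adj" and reg: "regular adj (q + 1)"
    and bdry: "\<omega>m \<in> boundary adj" "\<omega>p \<in> boundary adj" "\<omega>m \<noteq> \<omega>p"
    and o_on: "\<exists>l. is_line adj \<omega>m \<omega>p l \<and> o' \<in> range l"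
    and t_aut: "t \<in> aut adj"
    and t_fix: "bact t \<omega>m = \<omega>m" "bact t \<omega>p = \<omega>p"
    and t_transl: "\<forall>l. is_line adj \<omega>m \<omega>p l \<longrightarrow> (\<forall>k. t (l k) = l (k + 1))"
    and r_K: "r \<in> stabK adj o'" and r_inv: "r \<circ> r = id"
    and r_conj: "\<forall>j. r \<circ> tpow t j \<circ> inv r = tpow t (- j)"
    and g: "g \<in> aut adj" and g': "g' \<in> aut adj"
  shows "(dfun adj q o' \<omega>p t r s s' (g' \<circ> g) =
           (complex_of_nat q) powr ((1/2 + \<i> * s) * of_int (pairing adj o' (g' o') (bact (g' \<circ> g) \<omega>p))) *
           (complex_of_nat q) powr ((1/2 + \<i> * s') * of_int (pairing adj o' (g' o') (bact (g' \<circ> g) \<omega>m))) *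
           dfun adj q o' \<omega>p t r s s' g) \<and>
         (dfun adj q o' \<omega>p t r s s' (g \<circ> tpow t n) =
           (complex_of_nat q) powr (of_int n * (1/2 + \<i> * s)) *
           (complex_of_nat q) powr (- of_int n * (1/2 + \<i> * s')) *
           dfun adj q o' \<omega>p t r s s' g)"
  proof -
  obtain l where l: "is_line adj \<omega>m \<omega>p l" "o' \<in> range l" using o_on by blast
  then obtain c where c: "o' = l c" by auto
  have ttr: "\<forall>k. t (l k) = l (k + 1)" using t_transl l(1) by blast
  interpret S adj q o' \<omega>m \<omega>p t r l c
    by unfold_locales (rule tree reg bdry(1) bdry(2) l(1) c t_aut t_fix(1) t_fix(2) ttr r_K r_inv r_conj)+
  have ra: "r \<in> aut adj" by (rule r_aut)
  have a1: "g' \<circ> g \<in> aut adj" by (rule aut_comp[OF g' g])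
  have a2: "(g' \<circ> g) \<circ> r \<in> aut adj" by (rule aut_comp[OF a1 ra])
  have a3: "g \<circ> r \<in> aut adj" by (rule aut_comp[OF g ra])
  have a4: "g \<circ> tpow t n \<in> aut adj" by (rule aut_comp[OF g tpow_aut[OF t_aut]])
  have a5: "(g \<circ> tpow t n) \<circ> r \<in> aut adj" by (rule aut_comp[OF a4 ra])
  have e1: "Hc adj o' \<omega>p t (g' \<circ> g) = pairing adj o' (g' o') (bact (g' \<circ> g) \<omega>p) + Hc adj o' \<omega>p t g"
    using part1a[OF g g'] Hc_Phi[OF a1] Hc_Phi[OF g] by simp
  have e2: "Hc adj o' \<omega>p t ((g' \<circ> g) \<circ> r) = pairing adj o' (g' o') (bact (g' \<circ> g) \<omega>m) + Hc adj o' \<omega>p t (g \<circ> r)"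
    using part1b[OF g g'] Hc_Phi[OF a2] Hc_Phi[OF a3] by simp
  have e3: "Hc adj o' \<omega>p t (g \<circ> tpow t n) = Hc adj o' \<omega>p t g + n"
    using part2a[OF g] Hc_Phi[OF a4] Hc_Phi[OF g] by simp
  have e4: "Hc adj o' \<omega>p t ((g \<circ> tpow t n) \<circ> r) = Hc adj o' \<omega>p t (g \<circ> r) - n"
    using part2b[OF g] Hc_Phi[OF a5] Hc_Phi[OF a3] by simp
  have pw: "x powr (a * of_int (u + v)) = x powr (a * of_int u) * x powr (a * of_int v)" for x a :: complex and u v :: int
    proof -
    have "a * of_int (u + v) = a * of_int u + a * of_int v" by (simp add: algebra_simps)
    then show ?thesis by (simp only: powr_add)
  qed
  have pw2: "x powr (a * of_int (u + m)) = x powr (a * of_int u) * x powr (of_int m * a)" for x a :: complex and u m :: int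
    proof -
    have "a * of_int (u + m) = a * of_int u + of_int m * a" by (simp add: algebra_simps)
    then show ?thesis by (simp only: powr_add)
  qed
  have pw3: "x powr (a * of_int (u - m)) = x powr (a * of_int u) * x powr (- of_int m * a)" for x a :: complex and u m :: int
    proof -
    have "a * of_int (u - m) = a * of_int u + (- of_int m * a)" by (simp add: algebra_simps)
    then show ?thesis by (simp only: powr_add)
  qed
  show ?thesis
    unfolding dfun_def e1 e2 e3 e4 pw pw2 pw3 by (simp add: mult_ac)
qed

end
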